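(* Let $\mu^*\in\mathbb{R}^{p\times K}$ and $L^*\in\mathcal{L}_K$ with $|\mathrm{supp}(\mu^* )|\le s$, $\min_{k\ne k'}\|\mu^*_k-\mu^*_{k'}\|_2\ge c_0$ and $\|\mu^*(L^* )^T\|_F^2\le C_0sn$ for constants $c_0,C_0>0$. Let $$\widetilde{\Theta}_K=\left\{\frac{\mu L^T-\mu^*(L^* )^T}{\|\mu L^T-\mu^*(L^* )^T\|_F}:\ \mu\in\mathbb{R}^{p\times K},\ |\mathrm{supp}(\mu)|\le s,\ L\in\mathcal{L}_K,\ \mu L^T\neq\mu^*(L^* )^T\right\}.$$ Then there is a constant $C>0$ (depending only on $c_0,C_0$) such that for all $\epsilon\in(0,2]$, $$\log N(\epsilon,\widetilde{\Theta}_K,\|\cdot\|_F)\le C\left(n\log K+s\log\frac{p}{s}+sK\log n+sK\log\frac{6}{\epsilon}\right),$$ where $N(\epsilon,\cdot,\|\cdot\|_F)$ is the $\epsilon$-covering number with respect to the Frobenius norm.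
   Context: $\mathcal{L}_K$ is the set of $n\times K$ matrices $L=[l_1,\dots,l_n]^T$ with each row $l_i\in\{0,1\}^K$ having exactly one entry equal to $1$ (cluster-assignment matrices). For $\mu=[\mu_1,\dots,\mu_K]\in\mathbb{R}^{p\times K}$, $\mathrm{supp}(\mu)$ is the set of indices of the nonzero rows of $\mu$. Here $n\ge 2$, $K\ge 2$ and $1\le s\le p$. *)

theory Defs
  imports Complex_Main
begin

text \<open>Matrices are represented as functions nat => nat => real; only the entries
  inside the stated index range are meaningful.  A p x K matrix mu has columns
  mu_k = (mu j k)_{j<p}; an n x K matrix L has rows l_i = (L i k)_{k<K}.\<close>

definition cluster_assignment :: "nat \<Rightarrow> nat \<Rightarrow> (nat \<Rightarrow> nat \<Rightarrow> real) \<Rightarrow> bool" where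
  "cluster_assignment n K L \<longleftrightarrow>
     (\<forall>i<n. (\<forall>k<K. L i k = 0 \<or> L i k = 1) \<and> card {k. k < K \<and> L i k = 1} = 1)"

definition mult_transpose :: "nat \<Rightarrow> nat \<Rightarrow> nat \<Rightarrow> (nat \<Rightarrow> nat \<Rightarrow> real) \<Rightarrow> (nat \<Rightarrow> nat \<Rightarrow> real) \<Rightarrow> (nat \<Rightarrow> nat \<Rightarrow> real)" where
  "mult_transpose p n K mu L = (\<lambda>j i. if j < p \<and> i < n then (\<Sum>k<K. mu j k * L i k) else 0)"

definition frob :: "nat \<Rightarrow> nat \<Rightarrow> (nat \<Rightarrow> nat \<Rightarrow> real) \<Rightarrow> real" where
  "frob p n A = sqrt (\<Sum>j<p. \<Sum>i<n. (A j i)\<^sup>2)"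

definition supp_card :: "nat \<Rightarrow> nat \<Rightarrow> (nat \<Rightarrow> nat \<Rightarrow> real) \<Rightarrow> nat" where
  "supp_card p K mu = card {j. j < p \<and> (\<exists>k<K. mu j k \<noteq> 0)}"

definition col_dist :: "nat \<Rightarrow> (nat \<Rightarrow> nat \<Rightarrow> real) \<Rightarrow> nat \<Rightarrow> nat \<Rightarrow> real" where
  "col_dist p mu k k' = sqrt (\<Sum>j<p. (mu j k - mu j k')\<^sup>2)"

definition Theta_tilde :: "nat \<Rightarrow> nat \<Rightarrow> nat \<Rightarrow> nat \<Rightarrow> (nat \<Rightarrow> nat \<Rightarrow> real) \<Rightarrow> (nat \<Rightarrow> nat \<Rightarrow> real)
    \<Rightarrow> (nat \<Rightarrow> nat \<Rightarrow> real) set" where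
  "Theta_tilde p n K s mus Ls =
     {(\<lambda>j i. (mult_transpose p n K mu L j i - mult_transpose p n K mus Ls j i) /
              frob p n (\<lambda>j i. mult_transpose p n K mu L j i - mult_transpose p n K mus Ls j i))
      | mu L. supp_card p K mu \<le> s \<and> cluster_assignment n K L \<and>
              mult_transpose p n K mu L \<noteq> mult_transpose p n K mus Ls}"

definition covering_number :: "nat \<Rightarrow> nat \<Rightarrow> real \<Rightarrow> (nat \<Rightarrow> nat \<Rightarrow> real) set \<Rightarrow> nat" where
  "covering_number p n eps S =
     Inf {card C | C. finite C \<and> (\<forall>x\<in>S. \<exists>c\<in>C. frob p n (\<lambda>j i. x j i - c j i) \<le> eps)}"

end

theory Submission
  imports Defs "HOL-Library.FuncSet"
begin

definition ip :: "nat \<Rightarrow> nat \<Rightarrow> (nat \<Rightarrow> nat \<Rightarrow> real) \<Rightarrow> (nat \<Rightarrow> nat \<Rightarrow> real) \<Rightarrow> real" where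
  "ip p n A B = (\<Sum>j<p. \<Sum>i<n. A j i * B j i)"

definition lc :: "(nat \<Rightarrow> nat \<Rightarrow> real) list \<Rightarrow> (nat \<Rightarrow> real) \<Rightarrow> (nat \<Rightarrow> nat \<Rightarrow> real)" where
  "lc es c = (\<lambda>j i. \<Sum>k<length es. c k * (es!k) j i)"

definition orthonormal :: "nat \<Rightarrow> nat \<Rightarrow> (nat \<Rightarrow> nat \<Rightarrow> real) list \<Rightarrow> bool" where
  "orthonormal p n es \<longleftrightarrow> (\<forall>k<length es. \<forall>l<length es. ip p n (es!k) (es!l) = (if k = l then 1 else 0))"

definition inspan :: "nat \<Rightarrow> nat \<Rightarrow> (nat \<Rightarrow> nat \<Rightarrow> real) list \<Rightarrow> (nat \<Rightarrow> nat \<Rightarrow> real) \<Rightarrow> bool" where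
  "inspan p n es x \<longleftrightarrow> (\<exists>c. \<forall>j<p. \<forall>i<n. x j i = lc es c j i)"

lemma frob_ip: "frob p n A = sqrt (ip p n A A)"
  by (simp add: frob_def ip_def power2_eq_square)

lemma ip_sym: "ip p n A B = ip p n B A"
  by (simp add: ip_def mult.commute)

lemma ip_cong: "(\<And>j i. j < p \<Longrightarrow> i < n \<Longrightarrow> A j i = A' j i) \<Longrightarrow> ip p n A B = ip p n A' B"
  by (simp add: ip_def)

lemma ip_sum_left: "ip p n (\<lambda>j i. \<Sum>k\<in>S. g k j i) B = (\<Sum>k\<in>S. ip p n (g k) B)"
  unfolding ip_def by (simp add: sum_distrib_right sum.swap[of _ S])

lemma ip_scale_left: "ip p n (\<lambda>j i. a * A j i) B = a * ip p n A B"
  unfolding ip_def by (simp add: sum_distrib_left mult.assoc)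

lemma ip_diff_left: "ip p n (\<lambda>j i. A j i - A' j i) B = ip p n A B - ip p n A' B"
  unfolding ip_def by (simp add: sum_subtractf left_diff_distrib)

lemma ip_nonneg: "ip p n A A \<ge> 0"
  unfolding ip_def by (auto intro!: sum_nonneg)

lemma ip_zero_iff: "ip p n A A = 0 \<longleftrightarrow> (\<forall>j<p. \<forall>i<n. A j i = 0)"
proof -
  have nn: "\<And>j. 0 \<le> (\<Sum>i<n. A j i * A j i)" by (auto intro!: sum_nonneg)
  show ?thesis unfolding ip_def
    by (simp add: sum_nonneg_eq_0_iff nn) blast
qed

lemma ip_lc_left: "ip p n (lc es c) B = (\<Sum>k<length es. c k * ip p n (es!k) B)"
  unfolding lc_def by (simp add: ip_sum_left ip_scale_left)

lemma ip_lc_lc: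
  assumes "orthonormal p n es"
  shows "ip p n (lc es c) (lc es d) = (\<Sum>k<length es. c k * d k)"
proof -
  have "ip p n (lc es c) (lc es d) = (\<Sum>k<length es. c k * ip p n (lc es d) (es!k))"
    by (simp add: ip_lc_left ip_sym)
  also have "\<dots> = (\<Sum>k<length es. c k * d k)"
  proof (rule sum.cong[OF refl])
    fix k assume k: "k \<in> {..<length es}"
    have "ip p n (lc es d) (es!k) = (\<Sum>l<length es. d l * (if l = k then 1 else 0))"
      unfolding ip_lc_left using assms k by (intro sum.cong) (auto simp: orthonormal_def)
    also have "\<dots> = d k" using k by (simp add: if_distrib cong: if_cong)
    finally show "c k * ip p n (lc es d) (es!k) = c k * d k" by simp
  qed
  finally show ?thesis .
qed

lemma lc_snoc: "lc (es @ [e]) c = (\<lambda>j i. lc es c j i + c (length es) * e j i)"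
  unfolding lc_def by (auto simp: nth_append intro!: ext)

lemma inspan_snoc: "inspan p n es x \<Longrightarrow> inspan p n (es @ [e]) x"
proof -
  assume "inspan p n es x"
  then obtain c where c: "\<forall>j<p. \<forall>i<n. x j i = lc es c j i" by (auto simp: inspan_def)
  show ?thesis unfolding inspan_def
    by (rule exI[of _ "\<lambda>k. if k < length es then c k else 0"])
      (auto simp: lc_snoc c lc_def nth_append intro!: sum.cong)
qed

lemma gram_schmidt:
  "\<exists>es. length es \<le> length vs \<and> orthonormal p n es \<and> (\<forall>v\<in>set vs. inspan p n es v)"
proof (induction vs)
  case Nil
  show ?case by (rule exI[of _ "[]"]) (simp add: orthonormal_def)
next
  case (Cons v vs)
  then obtain es where es: "length es \<le> length vs" "orthonormal p n es" "\<forall>v\<in>set vs. inspan p n es v"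
    by blast
  define a where "a = (\<lambda>k. ip p n v (es!k))"
  define r where "r = (\<lambda>j i. v j i - lc es a j i)"
  show ?case
  proof (cases "ip p n r r = 0")
    case True
    hence "\<forall>j<p. \<forall>i<n. v j i = lc es a j i" by (simp add: ip_zero_iff r_def)
    hence "inspan p n es v" by (auto simp: inspan_def)
    thus ?thesis using es by (intro exI[of _ es]) auto
  next
    case False
    define nr where "nr = sqrt (ip p n r r)"
    have nrpos: "nr > 0" using False ip_nonneg[of p n r] by (simp add: nr_def)
    define e where "e = (\<lambda>j i. r j i / nr)"
    have re: "ip p n r (es!l) = 0" if l: "l < length es" for l
    proof -
      have "ip p n (lc es a) (es!l) = (\<Sum>k<length es. a k * (if k = l then 1 else 0))"
        unfolding ip_lc_left using es(2) l by (intro sum.cong) (auto simp: orthonormal_def)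
      also have "\<dots> = a l" using l by (simp add: if_distrib cong: if_cong)
      finally show ?thesis unfolding r_def ip_diff_left by (simp add: a_def)
    qed
    have ee: "ip p n e e = 1"
    proof -
      have "ip p n e e = ip p n r r / (nr * nr)"
        unfolding e_def using ip_scale_left[of p n "1/nr" r] ip_scale_left[of p n "1/nr" "\<lambda>j i. r j i / nr"]
          ip_sym[of p n r "\<lambda>j i. r j i / nr"]
        by (simp add: field_simps)
      also have "\<dots> = 1" using nrpos False ip_nonneg[of p n r] by (simp add: nr_def)
      finally show ?thesis .
    qed
    have eo: "ip p n e (es!l) = 0" if "l < length es" for l
      unfolding e_def using ip_scale_left[of p n "1/nr" r] re[OF that] by simp
    have orth: "orthonormal p n (es @ [e])"
      unfolding orthonormal_def
    proof (intro allI impI)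
      fix k l assume k: "k < length (es @ [e])" and l: "l < length (es @ [e])"
      show "ip p n ((es @ [e]) ! k) ((es @ [e]) ! l) = (if k = l then 1 else 0)"
      proof (cases "k < length es")
        case True
        show ?thesis
        proof (cases "l < length es")
          case True
          with \<open>k < length es\<close> es(2) show ?thesis by (simp add: nth_append orthonormal_def)
        next
          case False
          hence "l = length es" using l by simp
          thus ?thesis using True eo[OF True] ip_sym[of p n e] by (simp add: nth_append)
        qed
      next
        case False
        hence kk: "k = length es" using k by simp
        show ?thesis
        proof (cases "l < length es")
          case True
          thus ?thesis using kk eo[OF True] by (simp add: nth_append)
        next
          case False
          hence "l = length es" using l by simp
          thus ?thesis using kk ee by (simp add: nth_append)
        qed
      qed
    qed
    have vspan: "inspan p n (es @ [e]) v"
      unfolding inspan_def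
    proof (rule exI[of _ "\<lambda>k. if k < length es then a k else nr"], intro allI impI)
      fix j i assume "j < p" "i < n"
      have "lc (es @ [e]) (\<lambda>k. if k < length es then a k else nr) j i = lc es a j i + nr * e j i"
        by (auto simp: lc_snoc lc_def nth_append intro!: sum.cong)
      also have "\<dots> = v j i" using nrpos by (simp add: e_def r_def)
      finally show "v j i = lc (es @ [e]) (\<lambda>k. if k < length es then a k else nr) j i" by simp
    qed
    show ?thesis
      using es orth vspan inspan_snoc by (intro exI[of _ "es @ [e]"]) auto
  qed
qed

definition Zs :: "nat \<Rightarrow> nat \<Rightarrow> int list set" where
  "Zs m M = {z. length z = m \<and> sum_list (map abs z) \<le> int M}"

lemma Zs_card: "finite (Zs m M) \<and> card (Zs m M) \<le> 2^m * ((M + m) choose m)"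
proof (induction m arbitrary: M)
  case 0
  have "Zs 0 M = {[]}" by (auto simp: Zs_def)
  thus ?case by simp
next
  case (Suc m)
  define F where "F = (\<lambda>b. \<Union>sg\<in>{1::int,-1}. (\<lambda>z. sg * int b # z) ` Zs m (M - b))"
  have sub: "Zs (Suc m) M \<subseteq> (\<Union>b\<in>{..M}. F b)"
  proof
    fix z assume z: "z \<in> Zs (Suc m) M"
    then obtain a z' where zz: "z = a # z'" and lz: "length z' = m"
      by (cases z) (auto simp: Zs_def)
    have s: "\<bar>a\<bar> + sum_list (map abs z') \<le> int M" using z zz by (simp add: Zs_def)
    have nn: "sum_list (map abs z') \<ge> 0" by (induction z') auto
    define b where "b = nat \<bar>a\<bar>"
    have bM: "b \<le> M" using s nn by (simp add: b_def)
    have z'Z: "z' \<in> Zs m (M - b)" using s lz bM by (simp add: Zs_def b_def of_nat_diff)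
    have "a = (if a \<ge> 0 then 1 else -1) * int b" by (simp add: b_def)
    hence "z \<in> F b" unfolding F_def zz using z'Z
      by (cases "a \<ge> 0") (auto intro!: image_eqI[of _ _ z'])
    thus "z \<in> (\<Union>b\<in>{..M}. F b)" using bM by auto
  qed
  have fin: "finite (F b)" for b using Suc.IH by (simp add: F_def)
  have cF: "card (F b) \<le> 2 * (2^m * ((M - b + m) choose m))" for b
  proof -
    have "card (F b) \<le> (\<Sum>sg\<in>{1::int,-1}. card ((\<lambda>z. sg * int b # z) ` Zs m (M - b)))"
      unfolding F_def by (rule card_UN_le) simp
    also have "\<dots> \<le> (\<Sum>sg\<in>{1::int,-1}. card (Zs m (M - b)))"
      by (intro sum_mono card_image_le) (use Suc.IH in auto)
    also have "\<dots> = 2 * card (Zs m (M - b))" by simp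
    also have "\<dots> \<le> 2 * (2^m * ((M - b + m) choose m))" using Suc.IH[of "M - b"] by simp
    finally show ?thesis .
  qed
  have finU: "finite (\<Union>b\<in>{..M}. F b)" using fin by simp
  have "card (Zs (Suc m) M) \<le> card (\<Union>b\<in>{..M}. F b)" by (rule card_mono[OF finU sub])
  also have "\<dots> \<le> (\<Sum>b\<le>M. card (F b))" by (rule card_UN_le) simp
  also have "\<dots> \<le> (\<Sum>b\<le>M. 2 * (2^m * ((M - b + m) choose m)))" by (intro sum_mono cF)
  also have "\<dots> = 2^Suc m * (\<Sum>b\<le>M. (M - b + m) choose m)" by (simp add: sum_distrib_left mult.assoc)
  also have "(\<Sum>b\<le>M. (M - b + m) choose m) = (\<Sum>b\<le>M. (m + b) choose b)"
  proof -
    have "(\<Sum>b\<le>M. (M - b + m) choose m) = (\<Sum>b=0..M. (M - b + m) choose m)"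
      by (simp add: atMost_atLeast0)
    also have "\<dots> = (\<Sum>b=0..M. (M - (M + 0 - b) + m) choose m)"
      by (rule sum.atLeastAtMost_rev)
    also have "\<dots> = (\<Sum>b=0..M. (m + b) choose b)"
    proof (intro sum.cong refl)
      fix b assume "b \<in> {0..M}"
      hence "M - (M + 0 - b) + m = b + m" by simp
      thus "(M - (M + 0 - b) + m) choose m = (m + b) choose b"
        using binomial_symmetric[of b "b+m"] by (simp add: add.commute)
    qed
    finally show ?thesis by (simp add: atMost_atLeast0)
  qed
  also have "\<dots> = Suc (m + M) choose M" by (rule sum_choose_lower)
  also have "\<dots> = (M + Suc m) choose Suc m"
    using binomial_symmetric[of M "Suc (m + M)"] by (simp add: add.commute)
  finally show ?case using sub finU finite_subset by blast
qed

lemma pow_fact_le_exp: "(x::real) \<ge> 0 \<Longrightarrow> x ^ m / fact m \<le> exp x"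
proof -
  assume x: "x \<ge> 0"
  obtain t where t: "exp x = (\<Sum>k<Suc m. x ^ k / fact k) + (exp t / fact (Suc m)) * x ^ Suc m"
    using Maclaurin_exp_le[of x "Suc m"] by blast
  have "x ^ m / fact m \<le> (\<Sum>k<Suc m. x ^ k / fact k)"
    by (rule member_le_sum) (use x in auto)
  moreover have "(exp t / fact (Suc m)) * x ^ Suc m \<ge> 0" using x by simp
  ultimately show ?thesis using t by linarith
qed

lemma choose_le_pow_fact: "real (N choose m) \<le> real N ^ m / fact m"
proof (cases "m \<le> N")
  case True
  have d: "fact (N - m) dvd (fact N :: nat)" by (rule fact_dvd) simp
  have "(fact N / fact (N - m) :: real) = real (fact N div fact (N - m))"
    using real_of_nat_div[OF d] by simp
  also have "\<dots> \<le> real (N ^ m)" using fact_div_fact_le_pow[OF True] by linarith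
  finally have le: "(fact N / fact (N - m) :: real) \<le> real N ^ m" by simp
  have "real (N choose m) = (fact N / fact (N - m)) / fact m"
    using binomial_fact[OF True, where 'a=real] by (simp add: field_simps)
  also have "\<dots> \<le> real N ^ m / fact m" by (rule divide_right_mono[OF le]) simp
  finally show ?thesis .
next
  case False
  thus ?thesis by (simp add: binomial_eq_0)
qed

lemma choose_le_exp: "m > 0 \<Longrightarrow> real (N choose m) \<le> (exp 1 * real N / real m) ^ m"
proof -
  assume m: "m > 0"
  have f: "real m ^ m / fact m \<le> exp (real m)" by (rule pow_fact_le_exp) simp
  have "real (N choose m) \<le> real N ^ m / fact m" by (rule choose_le_pow_fact)
  also have "\<dots> = (real N / real m) ^ m * (real m ^ m / fact m)"
    using m by (simp add: power_divide)
  also have "\<dots> \<le> (real N / real m) ^ m * exp (real m)"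
    by (intro mult_left_mono f) simp
  also have "exp (real m) = exp 1 ^ m" using exp_of_nat_mult[of m 1] by simp
  also have "(real N / real m) ^ m * exp 1 ^ m = (exp 1 * real N / real m) ^ m"
    by (subst power_mult_distrib[symmetric]) (simp add: mult.commute)
  finally show ?thesis .
qed

lemma lc_diff: "lc es c j i - lc es d j i = lc es (\<lambda>k. c k - d k) j i"
  unfolding lc_def by (simp add: sum_subtractf left_diff_distrib)

lemma abs_le_amgm: "(a::real) > 0 \<Longrightarrow> \<bar>c\<bar> \<le> (c^2 * a + 1 / a) / 2"
proof -
  assume a: "a > 0"
  have "0 \<le> (\<bar>c\<bar> * a - 1)^2" by simp
  hence "2 * \<bar>c\<bar> * a \<le> c^2 * a^2 + 1" by (simp add: power2_eq_square algebra_simps)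
  hence "2 * \<bar>c\<bar> \<le> (c^2 * a^2 + 1) / a" using a by (simp add: le_divide_eq mult.commute mult.left_commute)
  also have "(c^2 * a^2 + 1) / a = c^2 * a + 1 / a" using a by (simp add: field_simps power2_eq_square)
  finally show ?thesis by simp
qed

lemma count_bound:
  fixes m :: nat
  assumes e: "0 < eps" "eps \<le> 2"
  defines "M \<equiv> nat \<lfloor>real (m+1) / eps + real m / 2\<rfloor>"
  shows "real (2^m * ((M + m) choose m)) \<le> (30/eps)^m"
proof (cases "m = 0")
  case True thus ?thesis by simp
next
  case False
  hence m: "m > 0" by simp
  have B0: "real (m+1) / eps + real m / 2 \<ge> 0" using e by simp
  have "real M \<le> real (m+1) / eps + real m / 2" unfolding M_def using B0 by linarith
  also have "\<dots> \<le> 2 * real m / eps + real m / 2"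
    using m e by (intro add_right_mono divide_right_mono) auto
  finally have "real (M + m) \<le> 2 * real m / eps + 3 * real m / 2" by simp
  also have "3 * real m / 2 \<le> 3 * real m / eps"
    using e m by (intro divide_left_mono) auto
  finally have Mm: "real (M + m) \<le> 5 * real m / eps" by simp
  have "real ((M + m) choose m) \<le> (exp 1 * real (M + m) / real m) ^ m"
    by (rule choose_le_exp[OF m])
  also have "\<dots> \<le> (15 / eps) ^ m"
  proof (rule power_mono)
    have "exp 1 * real (M + m) \<le> 3 * (5 * real m / eps)"
      by (rule mult_mono[OF exp_le Mm]) auto
    hence "exp 1 * real (M + m) / real m \<le> 3 * (5 * real m / eps) / real m"
      using m by (intro divide_right_mono) auto
    thus "exp 1 * real (M + m) / real m \<le> 15 / eps" using m by simp
  qed simp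
  finally have "real (2^m * ((M + m) choose m)) \<le> 2^m * (15/eps)^m"
    by (simp add: mult_left_mono)
  also have "\<dots> = (30/eps)^m" by (simp add: power_mult_distrib[symmetric])
  finally show ?thesis .
qed

lemma grid_cover:
  assumes on: "orthonormal p n es" and e: "0 < eps" "eps \<le> 2"
  shows "\<exists>G. finite G \<and> real (card G) \<le> (30/eps)^(length es) \<and>
    (\<forall>x. inspan p n es x \<and> ip p n x x \<le> 1 \<longrightarrow> (\<exists>g\<in>G. frob p n (\<lambda>j i. x j i - g j i) \<le> eps))"
proof -
  define m where "m = length es"
  define a where "a = sqrt (real m + 1)"
  have apos: "a > 0" by (simp add: a_def)
  have a2: "a * a = real m + 1" by (simp add: a_def)
  define d where "d = eps / a"
  have dpos: "d > 0" using e apos by (simp add: d_def)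
  define M where "M = nat \<lfloor>real (m+1) / eps + real m / 2\<rfloor>"
  define G where "G = (\<lambda>z. lc es (\<lambda>k. d * of_int (z!k))) ` Zs m M"
  have finZ: "finite (Zs m M)" and cZ: "card (Zs m M) \<le> 2^m * ((M + m) choose m)"
    using Zs_card by auto
  have finG: "finite G" using finZ by (simp add: G_def)
  have "card G \<le> 2^m * ((M + m) choose m)" unfolding G_def using card_image_le[OF finZ] cZ
    by (meson le_trans)
  hence "real (card G) \<le> real (2^m * ((M + m) choose m))" by linarith
  also have "\<dots> \<le> (30/eps)^m" unfolding M_def by (rule count_bound[OF e])
  finally have cardG: "real (card G) \<le> (30/eps)^(length es)" by (simp add: m_def)
  have cover: "\<exists>g\<in>G. frob p n (\<lambda>j i. x j i - g j i) \<le> eps"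
    if xs: "inspan p n es x" and x1: "ip p n x x \<le> 1" for x
  proof -
    obtain c where c: "\<forall>j<p. \<forall>i<n. x j i = lc es c j i" using xs by (auto simp: inspan_def)
    have "ip p n x x = ip p n (lc es c) (lc es c)"
      using ip_cong[of p n x "lc es c" x] ip_cong[of p n x "lc es c" "lc es c"] ip_sym[of p n x "lc es c"] c
      by auto
    hence S: "(\<Sum>k<m. (c k)^2) \<le> 1" using x1 ip_lc_lc[OF on, of c c]
      by (simp add: m_def power2_eq_square)
    define z where "z = map (\<lambda>k. round (c k / d)) [0..<m]"
    have lz: "length z = m" by (simp add: z_def)
    have zk: "z!k = round (c k / d)" if "k < m" for k using that by (simp add: z_def)
    have sumz: "sum_list (map abs z) = (\<Sum>k<m. \<bar>round (c k / d)\<bar>)"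
      unfolding z_def by (simp add: sum_list_sum_nth atLeast0LessThan)
    have sc: "(\<Sum>k<m. \<bar>c k\<bar>) \<le> a"
    proof -
      have "(\<Sum>k<m. \<bar>c k\<bar>) \<le> (\<Sum>k<m. ((c k)^2 * a + 1 / a) / 2)"
        by (intro sum_mono abs_le_amgm apos)
      also have "\<dots> = ((\<Sum>k<m. (c k)^2) * a + real m / a) / 2"
        by (simp add: sum_divide_distrib[symmetric] sum.distrib sum_distrib_right)
      also have "\<dots> \<le> (a + real m / a) / 2"
        using S apos by (intro divide_right_mono add_right_mono) (auto simp: mult_left_le_one_le)
      also have "\<dots> \<le> (a + (real m + 1) / a) / 2"
        using apos by (intro divide_right_mono add_left_mono divide_right_mono) auto
      also have "(real m + 1) / a = a" using a2 apos by (simp add: field_simps)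
      finally show ?thesis by simp
    qed
    have "real_of_int (sum_list (map abs z)) = (\<Sum>k<m. real_of_int \<bar>round (c k / d)\<bar>)"
      by (simp add: sumz)
    also have "\<dots> \<le> (\<Sum>k<m. \<bar>c k\<bar> / d + 1/2)"
    proof (rule sum_mono)
      fix k
      have "\<bar>of_int (round (c k / d)) - c k / d\<bar> \<le> 1/2" by (rule of_int_round_abs_le)
      hence "real_of_int \<bar>round (c k / d)\<bar> \<le> \<bar>c k / d\<bar> + 1/2" by linarith
      thus "real_of_int \<bar>round (c k / d)\<bar> \<le> \<bar>c k\<bar> / d + 1/2" using dpos by simp
    qed
    also have "\<dots> = (\<Sum>k<m. \<bar>c k\<bar>) / d + real m / 2"
      by (simp add: sum.distrib sum_divide_distrib[symmetric])
    also have "\<dots> \<le> a / d + real m / 2"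
      using sc dpos by (intro add_right_mono divide_right_mono) auto
    also have "a / d = real (m+1) / eps" using a2 apos e by (simp add: d_def field_simps)
    finally have "real_of_int (sum_list (map abs z)) \<le> real (m+1) / eps + real m / 2" .
    hence "sum_list (map abs z) \<le> \<lfloor>real (m+1) / eps + real m / 2\<rfloor>" by linarith
    hence "sum_list (map abs z) \<le> int M" unfolding M_def by linarith
    hence zZ: "z \<in> Zs m M" using lz by (simp add: Zs_def)
    define g where "g = lc es (\<lambda>k. d * of_int (z!k))"
    have gG: "g \<in> G" using zZ by (simp add: G_def g_def)
    define r where "r = (\<lambda>k. c k - d * of_int (z!k))"
    have rk: "(r k)^2 \<le> (d/2)^2" if "k < m" for k
    proof -
      have "\<bar>of_int (round (c k / d)) - c k / d\<bar> \<le> 1/2" by (rule of_int_round_abs_le)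
      moreover have "d * of_int (round (c k / d)) - c k = d * (of_int (round (c k / d)) - c k / d)"
        using dpos by (simp add: field_simps)
      ultimately have "\<bar>d * of_int (round (c k / d)) - c k\<bar> \<le> d / 2" using dpos
        by (simp add: abs_mult mult_left_mono)
      hence rr: "\<bar>r k\<bar> \<le> d / 2" using that by (simp add: r_def zk abs_minus_commute)
      show ?thesis using power_mono[OF rr abs_ge_zero, of 2] by simp
    qed
    have "ip p n (\<lambda>j i. x j i - g j i) (\<lambda>j i. x j i - g j i) = ip p n (lc es r) (lc es r)"
    proof -
      have eq: "\<And>j i. j < p \<Longrightarrow> i < n \<Longrightarrow> x j i - g j i = lc es r j i"
        using c by (simp add: g_def r_def lc_diff)
      show ?thesis
        using ip_cong[of p n "\<lambda>j i. x j i - g j i" "lc es r", OF eq]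
          ip_sym[of p n "\<lambda>j i. x j i - g j i" "lc es r"] by simp
    qed
    also have "\<dots> = (\<Sum>k<m. (r k)^2)" using ip_lc_lc[OF on, of r r] by (simp add: m_def power2_eq_square)
    also have "\<dots> \<le> (\<Sum>k<m. (d/2)^2)" by (intro sum_mono rk) simp
    also have "\<dots> = real m * eps^2 / (4 * (real m + 1))"
      using a2 apos by (simp add: d_def power_divide power2_eq_square)
    also have "\<dots> \<le> eps^2"
    proof -
      have "real m * eps^2 \<le> (4 * (real m + 1)) * eps^2" by (intro mult_right_mono) auto
      thus ?thesis by (simp add: divide_le_eq mult.commute[of "eps^2"])
    qed
    finally have "frob p n (\<lambda>j i. x j i - g j i) \<le> sqrt (eps^2)" unfolding frob_ip
      by (rule real_sqrt_le_mono)
    thus ?thesis using gG e by auto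
  qed
  show ?thesis using finG cardG cover by blast
qed

lemma inspan_cong: "(\<And>j i. j < p \<Longrightarrow> i < n \<Longrightarrow> A j i = B j i) \<Longrightarrow> inspan p n es B \<Longrightarrow> inspan p n es A"
  unfolding inspan_def by auto

lemma inspan_add: "inspan p n es A \<Longrightarrow> inspan p n es B \<Longrightarrow> inspan p n es (\<lambda>j i. A j i + B j i)"
proof -
  assume "inspan p n es A" "inspan p n es B"
  then obtain c d where c: "\<forall>j<p. \<forall>i<n. A j i = lc es c j i" and d: "\<forall>j<p. \<forall>i<n. B j i = lc es d j i"
    by (auto simp: inspan_def)
  show ?thesis unfolding inspan_def
    by (rule exI[of _ "\<lambda>k. c k + d k"]) (simp add: c d lc_def sum.distrib distrib_right)
qed

lemma inspan_scale: "inspan p n es A \<Longrightarrow> inspan p n es (\<lambda>j i. a * A j i)"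
proof -
  assume "inspan p n es A"
  then obtain c where c: "\<forall>j<p. \<forall>i<n. A j i = lc es c j i" by (auto simp: inspan_def)
  show ?thesis unfolding inspan_def
    by (rule exI[of _ "\<lambda>k. a * c k"]) (simp add: c lc_def sum_distrib_left mult.assoc)
qed

lemma inspan_zero: "inspan p n es (\<lambda>j i. 0)"
  unfolding inspan_def by (rule exI[of _ "\<lambda>k. 0"]) (simp add: lc_def)

lemma inspan_sum: "finite S \<Longrightarrow> (\<And>y. y \<in> S \<Longrightarrow> inspan p n es (g y)) \<Longrightarrow> inspan p n es (\<lambda>j i. \<Sum>y\<in>S. g y j i)"
proof (induction S rule: finite_induct)
  case empty
  show ?case using inspan_zero by simp
next
  case (insert y S)
  have "inspan p n es (\<lambda>j i. g y j i + (\<Sum>y\<in>S. g y j i))"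
    using insert by (intro inspan_add) auto
  thus ?case using insert by simp
qed

lemma card_LS:
  assumes "LS = {L. cluster_assignment n K L \<and> (\<forall>i k. \<not>(i < n \<and> k < K) \<longrightarrow> L i k = 0)}"
  shows "finite LS \<and> card LS \<le> K ^ n"
proof -
  define h where "h = (\<lambda>f::nat \<Rightarrow> nat. \<lambda>i k. if i < n \<and> k < K \<and> f i = k then (1::real) else 0)"
  have sub: "LS \<subseteq> h ` ({..<n} \<rightarrow>\<^sub>E {..<K})"
  proof
    fix L assume "L \<in> LS"
    hence ca: "cluster_assignment n K L" and out: "\<forall>i k. \<not>(i < n \<and> k < K) \<longrightarrow> L i k = 0"
      using assms by auto
    define f where "f = (\<lambda>i. if i < n then (THE k. k < K \<and> L i k = 1) else undefined)"
    have key: "f i < K \<and> (\<forall>k<K. L i k = (if f i = k then 1 else 0))" if i: "i < n" for i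
    proof -
      have c1: "card {k. k < K \<and> L i k = 1} = 1" and b: "\<forall>k<K. L i k = 0 \<or> L i k = 1"
        using ca i by (auto simp: cluster_assignment_def)
      then obtain k0 where k0: "{k. k < K \<and> L i k = 1} = {k0}" by (auto simp: card_1_singleton_iff)
      hence k0K: "k0 < K" "L i k0 = 1" by auto
      have uniq: "k = k0" if "k < K" "L i k = 1" for k using k0 that by auto
      have "(THE k. k < K \<and> L i k = 1) = k0"
        by (rule the_equality) (simp add: k0K, use uniq in blast)
      hence fi: "f i = k0" by (simp add: f_def i)
      show ?thesis
      proof (intro conjI allI impI)
        show "f i < K" using fi k0K by simp
      next
        fix k assume kK: "k < K"
        show "L i k = (if f i = k then 1 else 0)"
        proof (cases "k = k0")
          case True thus ?thesis using fi k0K by simp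
        next
          case False
          hence "L i k \<noteq> 1" using uniq kK by blast
          hence "L i k = 0" using b kK by blast
          thus ?thesis using fi False by simp
        qed
      qed
    qed
    have fK: "\<forall>i<n. f i < K" using key by blast
    have fext: "f \<in> extensional {..<n}" by (simp add: f_def extensional_def)
    have fP: "f \<in> {..<n} \<rightarrow>\<^sub>E {..<K}" using fK fext by (simp add: PiE_iff)
    have "L = h f"
    proof (rule ext, rule ext)
      fix i k show "L i k = h f i k"
      proof (cases "i < n \<and> k < K")
        case True
        hence "L i k = (if f i = k then 1 else 0)" using key[of i] by blast
        thus ?thesis using True by (simp add: h_def)
      next
        case False
        hence "L i k = 0" using out by blast
        moreover have "h f i k = 0" using False unfolding h_def by auto
        ultimately show ?thesis by simp
      qed
    qed
    thus "L \<in> h ` ({..<n} \<rightarrow>\<^sub>E {..<K})" using fP by blast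
  qed
  have fin: "finite ({..<n} \<rightarrow>\<^sub>E {..<K})" by (simp add: finite_PiE)
  have "card LS \<le> card (h ` ({..<n} \<rightarrow>\<^sub>E {..<K}))" by (rule card_mono) (use fin sub in auto)
  also have "\<dots> \<le> card ({..<n} \<rightarrow>\<^sub>E {..<K})" by (rule card_image_le[OF fin])
  also have "\<dots> = K ^ n" by (simp add: card_PiE)
  finally show ?thesis using sub fin finite_subset by blast
qed

lemma final_ineq:
  fixes n K s p :: nat and eps N :: real
  assumes n: "n \<ge> 2" and K: "K \<ge> 2" and s: "1 \<le> s" "s \<le> p" and e: "0 < eps" "eps \<le> 2"
    and N0: "N \<ge> 0"
    and NB: "N \<le> real K ^ n * (exp 1 * real p / real s) ^ s * (30 / eps) ^ (s * K + 1)"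
  shows "ln N \<le> 7 * (real n * ln (real K) + real s * ln (real p / real s)
                 + real s * real K * ln (real n) + real s * real K * ln (6 / eps))"
proof -
  define L6 where "L6 = ln (6 / eps)"
  have ln3: "1 \<le> ln (3::real)"
  proof -
    have "ln (exp 1) \<le> ln (3::real)" using exp_le by (subst ln_le_cancel_iff) auto
    thus ?thesis by simp
  qed
  have "3 \<le> 6 / eps" using e by (simp add: field_simps)
  moreover have "0 < 6 / eps" using e by simp
  ultimately have "ln 3 \<le> L6" unfolding L6_def by simp
  hence L6ge: "1 \<le> L6" "ln 3 \<le> L6" using ln3 by auto
  have lnK: "ln (real K) \<ge> 0" using K by simp
  have lnn: "ln (real n) \<ge> 0" using n by simp
  have lnps: "ln (real p / real s) \<ge> 0" using s by simp
  have RHS0: "0 \<le> real n * ln (real K) + real s * ln (real p / real s)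
                 + real s * real K * ln (real n) + real s * real K * L6"
    using lnK lnn lnps L6ge by (intro add_nonneg_nonneg mult_nonneg_nonneg) auto
  show ?thesis
  proof (cases "N = 0")
    case True thus ?thesis using RHS0 by (simp add: L6_def)
  next
    case False
    hence Npos: "N > 0" using N0 by simp
    have pos1: "real K ^ n > 0" using K by simp
    have pos2: "(exp 1 * real p / real s) ^ s > 0" using s by simp
    have pos3: "(30 / eps) ^ (s * K + 1) > 0" using e by simp
    have "ln N \<le> ln (real K ^ n * (exp 1 * real p / real s) ^ s * (30 / eps) ^ (s * K + 1))"
      using Npos NB by (subst ln_le_cancel_iff) (auto intro!: mult_pos_pos pos1 pos2 pos3)
    also have "\<dots> = real n * ln (real K) + real s * ln (exp 1 * real p / real s)
                   + real (s * K + 1) * ln (30 / eps)"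
    proof -
      define a where "a = real K ^ n"
      define b where "b = (exp 1 * real p / real s) ^ s"
      define c where "c = (30 / eps) ^ (s * K + 1)"
      have "ln (a * b * c) = ln a + ln b + ln c"
        using pos1 pos2 pos3 unfolding a_def[symmetric] b_def[symmetric] c_def[symmetric]
        by (simp add: ln_mult)
      thus ?thesis unfolding a_def b_def c_def by (simp only: ln_realpow)
    qed
    also have "ln (exp 1 * real p / real s) = 1 + ln (real p / real s)"
      using s by (simp add: ln_mult ln_div)
    also have "ln (30 / eps) = ln 5 + L6"
    proof -
      show ?thesis unfolding L6_def using ln_mult[of 5 "6/eps"] e by simp
    qed
    finally have A: "ln N \<le> real n * ln (real K) + real s * (1 + ln (real p / real s))
                     + real (s * K + 1) * (ln 5 + L6)" .
    have ln5: "ln (5::real) \<le> 2 * ln 3"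
    proof -
      have "ln (5::real) \<le> ln 9" by (subst ln_le_cancel_iff) auto
      also have "ln (9::real) = 2 * ln 3" using ln_realpow[of 3 2] by simp
      finally show ?thesis .
    qed
    have sK1: "real (s * K + 1) \<le> 2 * (real s * real K)"
    proof -
      have "1 \<le> s * K" using s K by (simp add: one_le_mult_iff)
      hence "1 \<le> real s * real K" by (metis of_nat_1 of_nat_le_iff of_nat_mult)
      thus ?thesis by (simp add: mult.commute)
    qed
    have t3: "real (s * K + 1) * (ln 5 + L6) \<le> 2 * (real s * real K) * (3 * L6)"
      using sK1 ln5 L6ge by (intro mult_mono) auto
    have t1: "real s \<le> real s * real K * L6"
    proof -
      have "1 * 1 \<le> real K * L6" using K L6ge by (intro mult_mono) auto
      hence "real s * 1 \<le> real s * (real K * L6)" by (intro mult_left_mono) auto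
      thus ?thesis by (simp add: mult.assoc)
    qed
    have "0 \<le> real s * real K * ln (real n)" using lnn by simp
    have "real n * ln (real K) \<ge> 0" using lnK by simp
    have "real s * ln (real p / real s) \<ge> 0" using lnps by simp
    show ?thesis unfolding L6_def[symmetric]
      using A t3 t1 \<open>0 \<le> real s * real K * ln (real n)\<close> \<open>real n * ln (real K) \<ge> 0\<close>
        \<open>real s * ln (real p / real s) \<ge> 0\<close>
      by (simp add: algebra_simps)
  qed
qed

definition vecs :: "nat \<Rightarrow> nat \<Rightarrow> nat \<Rightarrow> (nat \<Rightarrow> nat \<Rightarrow> real) \<Rightarrow> (nat \<Rightarrow> nat \<Rightarrow> real)
    \<Rightarrow> (nat \<Rightarrow> nat \<Rightarrow> real) \<Rightarrow> nat set \<Rightarrow> (nat \<Rightarrow> nat \<Rightarrow> real) list" where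
  "vecs p n K mus Ls L T =
     map (\<lambda>(j0, k). (\<lambda>j i. if j = j0 then L i k else 0)) (List.product (sorted_list_of_set T) [0..<K])
     @ [mult_transpose p n K mus Ls]"

lemma pair_cover:
  assumes T: "finite T" "card T = s" and e: "0 < eps" "eps \<le> 2"
  shows "\<exists>G. finite G \<and> real (card G) \<le> (30/eps)^(s*K+1) \<and>
    (\<forall>x. (\<forall>es. (\<forall>v\<in>set (vecs p n K mus Ls L T). inspan p n es v) \<longrightarrow> inspan p n es x)
          \<and> ip p n x x \<le> 1 \<longrightarrow> (\<exists>g\<in>G. frob p n (\<lambda>j i. x j i - g j i) \<le> eps))"
proof -
  obtain es where es: "length es \<le> length (vecs p n K mus Ls L T)" "orthonormal p n es"
      "\<forall>v\<in>set (vecs p n K mus Ls L T). inspan p n es v"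
    using gram_schmidt by blast
  have len: "length (vecs p n K mus Ls L T) = s * K + 1" using T by (simp add: vecs_def)
  obtain G where G: "finite G" "real (card G) \<le> (30/eps)^(length es)"
     "\<forall>x. inspan p n es x \<and> ip p n x x \<le> 1 \<longrightarrow> (\<exists>g\<in>G. frob p n (\<lambda>j i. x j i - g j i) \<le> eps)"
    using grid_cover[OF es(2) e] by blast
  have "(30/eps)^(length es) \<le> (30/eps)^(s*K+1)"
    using es(1) len e by (intro power_increasing) (auto simp: field_simps)
  thus ?thesis using G es(3) by (intro exI[of _ G]) auto
qed

lemma theta_elem:
  assumes x: "x \<in> Theta_tilde p n K s mus Ls" and sp: "s \<le> p"
  shows "\<exists>L T. (cluster_assignment n K L \<and> (\<forall>i k. \<not>(i < n \<and> k < K) \<longrightarrow> L i k = 0)) \<and>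
     (T \<subseteq> {..<p} \<and> card T = s) \<and>
     (\<forall>es. (\<forall>v\<in>set (vecs p n K mus Ls L T). inspan p n es v) \<longrightarrow> inspan p n es x) \<and> ip p n x x \<le> 1"
proof -
  obtain mu L where xd: "x = (\<lambda>j i. (mult_transpose p n K mu L j i - mult_transpose p n K mus Ls j i) /
              frob p n (\<lambda>j i. mult_transpose p n K mu L j i - mult_transpose p n K mus Ls j i))"
    and smu: "supp_card p K mu \<le> s" and ca: "cluster_assignment n K L"
    and ne: "mult_transpose p n K mu L \<noteq> mult_transpose p n K mus Ls"
    using x unfolding Theta_tilde_def by blast
  define L' where "L' = (\<lambda>i k. if i < n \<and> k < K then L i k else 0)"
  have eqL: "mult_transpose p n K mu L' = mult_transpose p n K mu L"
  proof (rule ext, rule ext)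
    fix j i
    show "mult_transpose p n K mu L' j i = mult_transpose p n K mu L j i"
    proof (cases "j < p \<and> i < n")
      case True
      have "(\<Sum>k<K. mu j k * L' i k) = (\<Sum>k<K. mu j k * L i k)"
        by (rule sum.cong) (use True in \<open>auto simp: L'_def\<close>)
      thus ?thesis using True by (simp add: mult_transpose_def)
    next
      case False thus ?thesis unfolding mult_transpose_def by (simp only: if_not_P[OF False] if_False)
    qed
  qed
  have caL': "cluster_assignment n K L'"
    unfolding cluster_assignment_def
  proof (rule allI, rule impI)
    fix i assume i: "i < n"
    have "{k. k < K \<and> L' i k = 1} = {k. k < K \<and> L i k = 1}" using i by (auto simp: L'_def)
    hence c: "card {k. k < K \<and> L' i k = 1} = 1" using ca i by (simp add: cluster_assignment_def)
    have "\<forall>k<K. L' i k = 0 \<or> L' i k = 1" using ca i by (simp add: cluster_assignment_def L'_def)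
    thus "(\<forall>k<K. L' i k = 0 \<or> L' i k = 1) \<and> card {k. k < K \<and> L' i k = 1} = 1" using c by blast
  qed
  have outL': "\<forall>i k. \<not>(i < n \<and> k < K) \<longrightarrow> L' i k = 0" by (simp add: L'_def)
  define Smu where "Smu = {j. j < p \<and> (\<exists>k<K. mu j k \<noteq> 0)}"
  have Smu_sub: "Smu \<subseteq> {..<p}" by (auto simp: Smu_def)
  have finS: "finite Smu" using Smu_sub finite_subset by blast
  have cS: "card Smu \<le> s" using smu by (simp add: supp_card_def Smu_def)
  have "s - card Smu \<le> card ({..<p} - Smu)"
    using card_Diff_subset[OF finS Smu_sub] sp by simp
  then obtain T0 where T0: "T0 \<subseteq> {..<p} - Smu" "card T0 = s - card Smu" "finite T0"
    by (rule obtain_subset_with_card_n)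
  define T where "T = Smu \<union> T0"
  have Tsub: "T \<subseteq> {..<p}" using T0 Smu_sub by (auto simp: T_def)
  have finT: "finite T" using finS T0 by (simp add: T_def)
  have cT: "card T = s" unfolding T_def using card_Un_disjoint[OF finS T0(3)] T0 cS by auto
  have SmuT: "Smu \<subseteq> T" by (simp add: T_def)
  define D where "D = (\<lambda>j i. mult_transpose p n K mu L' j i - mult_transpose p n K mus Ls j i)"
  define f where "f = frob p n D"
  have xD: "x = (\<lambda>j i. D j i / f)" unfolding xd D_def f_def eqL ..
  have Dpos: "ip p n D D > 0"
  proof (rule ccontr)
    assume "\<not> ip p n D D > 0"
    hence "ip p n D D = 0" using ip_nonneg[of p n D] by linarith
    hence z: "\<forall>j<p. \<forall>i<n. D j i = 0" by (simp add: ip_zero_iff)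
    have "mult_transpose p n K mu L' = mult_transpose p n K mus Ls"
    proof (rule ext, rule ext)
      fix j i
      show "mult_transpose p n K mu L' j i = mult_transpose p n K mus Ls j i"
      proof (cases "j < p \<and> i < n")
        case True thus ?thesis using z by (simp add: D_def)
      next
        case False thus ?thesis unfolding mult_transpose_def by (simp only: if_not_P[OF False] if_False)
      qed
    qed
    thus False using ne eqL by simp
  qed
  have fpos: "f > 0" using Dpos by (simp add: f_def frob_ip)
  have ff: "f * f = ip p n D D" using Dpos by (simp add: f_def frob_ip)
  have ipx: "ip p n x x = 1"
  proof -
    have "ip p n x x = (1/f) * ((1/f) * ip p n D D)"
      unfolding xD using ip_scale_left[of p n "1/f" D] ip_scale_left[of p n "1/f" "\<lambda>j i. D j i / f"]
        ip_sym[of p n D "\<lambda>j i. D j i / f"] by simp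
    also have "\<dots> = 1" using ff fpos Dpos by (simp add: field_simps)
    finally show ?thesis .
  qed
  define vec where "vec = (\<lambda>(j0::nat) (k::nat). (\<lambda>(j::nat) (i::nat). if j = j0 then L' i k else (0::real)))"
  define P where "P = (\<lambda>j i. \<Sum>j0\<in>T. \<Sum>k\<in>{..<K}. mu j0 k * vec j0 k j i)"
  have Pval: "P j i = mult_transpose p n K mu L' j i" if ji: "j < p" "i < n" for j i
  proof -
    have inner: "(\<Sum>k\<in>{..<K}. mu j0 k * vec j0 k j i) = (if j0 = j then (\<Sum>k<K. mu j k * L' i k) else 0)" for j0
      by (cases "j0 = j") (simp_all add: vec_def)
    have "P j i = (if j \<in> T then (\<Sum>k<K. mu j k * L' i k) else 0)"
      unfolding P_def inner using finT by simp
    also have "\<dots> = (\<Sum>k<K. mu j k * L' i k)"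
    proof (cases "j \<in> T")
      case False
      hence "j \<notin> Smu" using SmuT by blast
      hence "\<forall>k<K. mu j k = 0" using ji by (auto simp: Smu_def)
      thus ?thesis using False by simp
    qed simp
    also have "\<dots> = mult_transpose p n K mu L' j i" using ji by (simp add: mult_transpose_def)
    finally show ?thesis .
  qed
  have span: "inspan p n es x" if H: "\<forall>v\<in>set (vecs p n K mus Ls L' T). inspan p n es v" for es
  proof -
    have vin: "vec j0 k \<in> set (vecs p n K mus Ls L' T)" if "j0 \<in> T" "k < K" for j0 k
    proof -
      have "(j0, k) \<in> set (List.product (sorted_list_of_set T) [0..<K])" using that finT by simp
      thus ?thesis unfolding vecs_def vec_def by (auto intro!: image_eqI[of _ _ "(j0, k)"])
    qed
    have Ain: "mult_transpose p n K mus Ls \<in> set (vecs p n K mus Ls L' T)" by (simp add: vecs_def)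
    have "inspan p n es P" unfolding P_def
    proof (rule inspan_sum[OF finT])
      fix j0 assume j0: "j0 \<in> T"
      show "inspan p n es (\<lambda>j i. \<Sum>k\<in>{..<K}. mu j0 k * vec j0 k j i)"
      proof (rule inspan_sum)
        fix k assume k: "k \<in> {..<K}"
        have "inspan p n es (vec j0 k)" using H vin[OF j0] k by simp
        thus "inspan p n es (\<lambda>j i. mu j0 k * vec j0 k j i)" by (rule inspan_scale)
      qed simp
    qed
    hence "inspan p n es (\<lambda>j i. (1/f) * P j i + (-1/f) * mult_transpose p n K mus Ls j i)"
      using H Ain by (intro inspan_add[OF inspan_scale inspan_scale]) auto
    thus ?thesis
    proof (rule inspan_cong[rotated])
      fix j i assume "j < p" "i < n"
      thus "x j i = (1/f) * P j i + (-1/f) * mult_transpose p n K mus Ls j i"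
        using Pval by (simp add: xD D_def diff_divide_distrib)
    qed
  qed
  have "\<forall>es. (\<forall>v\<in>set (vecs p n K mus Ls L' T). inspan p n es v) \<longrightarrow> inspan p n es x"
    using span by blast
  thus ?thesis using caL' outL' Tsub cT ipx by (intro exI[of _ L'] exI[of _ T]) simp
qed

lemma main_fixed:
  fixes n p K s :: nat and mus Ls :: "nat \<Rightarrow> nat \<Rightarrow> real" and eps :: real
  assumes n: "n \<ge> 2" and K: "K \<ge> 2" and s: "1 \<le> s" "s \<le> p" and e: "0 < eps" "eps \<le> 2"
  shows "ln (real (covering_number p n eps (Theta_tilde p n K s mus Ls)))
          \<le> 7 * (real n * ln (real K) + real s * ln (real p / real s)
                 + real s * real K * ln (real n) + real s * real K * ln (6 / eps))"
proof -
  define LS where "LS = {L. cluster_assignment n K L \<and> (\<forall>i k. \<not>(i < n \<and> k < K) \<longrightarrow> L i k = 0)}"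
  define TS where "TS = {T. T \<subseteq> {..<p} \<and> card T = s}"
  define B where "B = (30/eps)^(s*K+1)"
  define Q where "Q = (\<lambda>L T G. finite G \<and> real (card G) \<le> B \<and>
    (\<forall>x. (\<forall>es. (\<forall>v\<in>set (vecs p n K mus Ls L T). inspan p n es v) \<longrightarrow> inspan p n es x)
          \<and> ip p n x x \<le> 1 \<longrightarrow> (\<exists>g\<in>G. frob p n (\<lambda>j i. x j i - g j i) \<le> eps)))"
  have "\<forall>LT. \<exists>G. finite (snd LT) \<and> card (snd LT) = s \<longrightarrow> Q (fst LT) (snd LT) G"
  proof
    fix LT :: "(nat \<Rightarrow> nat \<Rightarrow> real) \<times> nat set"
    show "\<exists>G. finite (snd LT) \<and> card (snd LT) = s \<longrightarrow> Q (fst LT) (snd LT) G"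
    proof (cases "finite (snd LT) \<and> card (snd LT) = s")
      case True
      then obtain G where "Q (fst LT) (snd LT) G"
        using pair_cover[of "snd LT" s eps K p n mus Ls "fst LT"] e unfolding Q_def B_def by blast
      thus ?thesis by blast
    next
      case False thus ?thesis by blast
    qed
  qed
  then obtain Gf where Gf: "\<And>LT. finite (snd LT) \<and> card (snd LT) = s \<Longrightarrow> Q (fst LT) (snd LT) (Gf LT)"
    by metis
  have LSc: "finite LS \<and> card LS \<le> K ^ n" by (rule card_LS) (simp add: LS_def)
  have finTS: "finite TS" unfolding TS_def by (rule finite_subset[of _ "Pow {..<p}"]) auto
  have cTS: "card TS = p choose s" unfolding TS_def using n_subsets[of "{..<p}" s] by simp
  have QLT: "Q L T (Gf (L, T))" if "(L, T) \<in> LS \<times> TS" for L T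
  proof -
    have "T \<subseteq> {..<p}" "card T = s" using that by (auto simp: TS_def)
    hence "finite (snd (L, T)) \<and> card (snd (L, T)) = s" using finite_subset by auto
    from Gf[OF this] show ?thesis by simp
  qed
  define Ctot where "Ctot = (\<Union>LT\<in>LS \<times> TS. Gf LT)"
  have finLT: "finite (LS \<times> TS)" using LSc finTS by simp
  have finC: "finite Ctot" unfolding Ctot_def using finLT QLT by (auto simp: Q_def)
  have "card Ctot \<le> (\<Sum>LT\<in>LS \<times> TS. card (Gf LT))" unfolding Ctot_def by (rule card_UN_le[OF finLT])
  hence "real (card Ctot) \<le> (\<Sum>LT\<in>LS \<times> TS. real (card (Gf LT)))"
    by (metis of_nat_le_iff of_nat_sum)
  also have "\<dots> \<le> of_nat (card (LS \<times> TS)) * B"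
    by (rule sum_bounded_above) (use QLT in \<open>auto simp: Q_def\<close>)
  also have "of_nat (card (LS \<times> TS)) = real (card LS) * real (card TS)"
    by (simp add: card_cartesian_product)
  also have "real (card LS) * real (card TS) * B \<le> real K ^ n * (exp 1 * real p / real s) ^ s * B"
  proof -
    have "real (card LS) \<le> real K ^ n" using LSc by (metis of_nat_le_iff of_nat_power)
    moreover have "real (card TS) \<le> (exp 1 * real p / real s) ^ s"
      unfolding cTS using choose_le_exp[of s p] s by simp
    moreover have "B \<ge> 0" using e by (simp add: B_def)
    ultimately show ?thesis by (intro mult_mono mult_nonneg_nonneg) auto
  qed
  finally have cardC: "real (card Ctot) \<le> real K ^ n * (exp 1 * real p / real s) ^ s * (30/eps)^(s*K+1)"
    by (simp add: B_def)
  have cover: "\<forall>x\<in>Theta_tilde p n K s mus Ls. \<exists>c\<in>Ctot. frob p n (\<lambda>j i. x j i - c j i) \<le> eps"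
  proof
    fix x assume x: "x \<in> Theta_tilde p n K s mus Ls"
    obtain L T where LT: "cluster_assignment n K L \<and> (\<forall>i k. \<not>(i < n \<and> k < K) \<longrightarrow> L i k = 0)"
       "T \<subseteq> {..<p} \<and> card T = s"
       "\<forall>es. (\<forall>v\<in>set (vecs p n K mus Ls L T). inspan p n es v) \<longrightarrow> inspan p n es x" "ip p n x x \<le> 1"
      using theta_elem[OF x s(2)] by blast
    have mem: "(L, T) \<in> LS \<times> TS" using LT(1,2) by (simp add: LS_def TS_def)
    from QLT[OF mem] obtain g where "g \<in> Gf (L, T)" "frob p n (\<lambda>j i. x j i - g j i) \<le> eps"
      using LT(3,4) unfolding Q_def by blast
    thus "\<exists>c\<in>Ctot. frob p n (\<lambda>j i. x j i - c j i) \<le> eps" using mem unfolding Ctot_def by blast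
  qed
  have "covering_number p n eps (Theta_tilde p n K s mus Ls) \<le> card Ctot"
    unfolding covering_number_def
    by (rule cInf_lower) (use finC cover in auto)
  hence "real (covering_number p n eps (Theta_tilde p n K s mus Ls)) \<le> real (card Ctot)" by simp
  with cardC have NB: "real (covering_number p n eps (Theta_tilde p n K s mus Ls))
      \<le> real K ^ n * (exp 1 * real p / real s) ^ s * (30/eps)^(s*K+1)" by linarith
  show ?thesis by (rule final_ineq[OF n K s e _ NB]) simp
qed

theorem mainTheorem4:
  fixes c0 C0 :: real
  assumes "c0 > 0" and "C0 > 0"
  shows "\<exists>C>0. \<forall>(n::nat) (p::nat) (K::nat) (s::nat) mus Ls.
     n \<ge> 2 \<and> K \<ge> 2 \<and> 1 \<le> s \<and> s \<le> p \<and>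
     cluster_assignment n K Ls \<and> supp_card p K mus \<le> s \<and>
     (\<forall>k<K. \<forall>k'<K. k \<noteq> k' \<longrightarrow> col_dist p mus k k' \<ge> c0) \<and>
     (frob p n (mult_transpose p n K mus Ls))\<^sup>2 \<le> C0 * real s * real n \<longrightarrow>
     (\<forall>eps. 0 < eps \<and> eps \<le> 2 \<longrightarrow>
        ln (real (covering_number p n eps (Theta_tilde p n K s mus Ls)))
          \<le> C * (real n * ln (real K) + real s * ln (real p / real s)
                 + real s * real K * ln (real n) + real s * real K * ln (6 / eps)))"
proof (rule exI[of _ 7], intro conjI allI impI)
  fix n p K s :: nat and mus Ls :: "nat \<Rightarrow> nat \<Rightarrow> real" and eps :: real
  assume h: "n \<ge> 2 \<and> K \<ge> 2 \<and> 1 \<le> s \<and> s \<le> p \<and>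
     cluster_assignment n K Ls \<and> supp_card p K mus \<le> s \<and>
     (\<forall>k<K. \<forall>k'<K. k \<noteq> k' \<longrightarrow> col_dist p mus k k' \<ge> c0) \<and>
     (frob p n (mult_transpose p n K mus Ls))\<^sup>2 \<le> C0 * real s * real n"
    and he: "0 < eps \<and> eps \<le> 2"
  show "ln (real (covering_number p n eps (Theta_tilde p n K s mus Ls)))
          \<le> 7 * (real n * ln (real K) + real s * ln (real p / real s)
                 + real s * real K * ln (real n) + real s * real K * ln (6 / eps))"
    by (rule main_fixed) (use h he in auto)
qed simp

end
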